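(* Let $\mathcal{G}$ be a $2$-$(n,b,k,r,\lambda)$ design. Then \[ \frac{n\lambda}{k}\leq e(\mathcal{G})\leq\frac{(n-1)\lambda}{k-1}. \] Moreover, if $\mathcal{G}$ is a symmetric design, then $e(\mathcal{G})=k=r$.
   Context: A $2$-$(n,b,k,r,\lambda)$ design is regarded as a $k$-uniform $r$-regular hypergraph $\mathcal{G}$ on $n$ vertices with $b$ edges (edges are $k$-element vertex subsets) such that every pair of distinct vertices lies in exactly $\lambda$ common edges. It is symmetric if $n=b$. For a proper nonempty $S\subset V(\mathcal{G})$ with $\overline{S}=V(\mathcal{G})\setminus S$, $E(S,\overline{S})$ is the set of edges containing vertices of both $S$ and $\overline{S}$; the edge connectivity $e(\mathcal{G})$ is the minimum of $|E(S,\overline{S})|$ over all proper nonempty $S$. *)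

theory Defs
  imports Main "HOL.Real"
begin

definition design2 :: "'a set \<Rightarrow> 'a set set \<Rightarrow> nat \<Rightarrow> nat \<Rightarrow> nat \<Rightarrow> nat \<Rightarrow> nat \<Rightarrow> bool" where
  "design2 V E n b k r lam \<longleftrightarrow>
     finite V \<and> card V = n \<and> E \<subseteq> Pow V \<and> finite E \<and> card E = b \<and>
     (\<forall>e\<in>E. card e = k) \<and>
     (\<forall>v\<in>V. card {e\<in>E. v \<in> e} = r) \<and>
     (\<forall>x\<in>V. \<forall>y\<in>V. x \<noteq> y \<longrightarrow> card {e\<in>E. x \<in> e \<and> y \<in> e} = lam)"

definition cut_edges :: "'a set \<Rightarrow> 'a set set \<Rightarrow> 'a set \<Rightarrow> 'a set set" where
  "cut_edges V E S = {e\<in>E. e \<inter> S \<noteq> {} \<and> e \<inter> (V - S) \<noteq> {}}"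

definition edge_conn :: "'a set \<Rightarrow> 'a set set \<Rightarrow> nat" where
  "edge_conn V E = Min {card (cut_edges V E S) | S. S \<subset> V \<and> S \<noteq> {}}"

end

theory Submission
  imports Defs
begin

lemma ineq_aux: fixes a b p q :: nat shows "(a+b+p+q)*(a*b) \<le> (a+b)*((a+p)*(b+q))"
  by (simp add: algebra_simps)

lemma card_filter_sum: "finite A \<Longrightarrow> card {x\<in>A. P x} = (\<Sum>x\<in>A. if P x then 1 else 0)"
  by (simp add: sum.If_cases Int_def)

lemma pair_count:
  assumes d: "design2 V E n b k r lam" and S: "S \<subseteq> V"
  shows "(\<Sum>e\<in>E. card (e\<inter>S) * card (e-S)) = lam * (card S * card (V-S))"
proof -
  have fV: "finite V" and EV: "E \<subseteq> Pow V" and fE: "finite E"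
    and pairs: "\<And>x y. x\<in>V \<Longrightarrow> y\<in>V \<Longrightarrow> x\<noteq>y \<Longrightarrow> card {e\<in>E. x \<in> e \<and> y \<in> e} = lam"
    using d unfolding design2_def by auto
  have fS: "finite S" using S fV finite_subset by blast
  have fP: "finite (S \<times> (V-S))" using fS fV by auto
  have "(\<Sum>e\<in>E. card (e\<inter>S) * card (e-S))
      = (\<Sum>e\<in>E. \<Sum>p\<in>S \<times> (V-S). if fst p \<in> e \<and> snd p \<in> e then 1 else 0)"
  proof (rule sum.cong[OF refl])
    fix e assume e: "e \<in> E"
    have "(e\<inter>S) \<times> (e-S) = {p\<in>S \<times> (V-S). fst p \<in> e \<and> snd p \<in> e}"
      using e EV by auto
    hence "card (e\<inter>S) * card (e-S) = card {p\<in>S \<times> (V-S). fst p \<in> e \<and> snd p \<in> e}"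
      by (metis card_cartesian_product)
    thus "card (e\<inter>S) * card (e-S) = (\<Sum>p\<in>S \<times> (V-S). if fst p \<in> e \<and> snd p \<in> e then 1 else 0)"
      using card_filter_sum[OF fP] by simp
  qed
  also have "\<dots> = (\<Sum>p\<in>S \<times> (V-S). \<Sum>e\<in>E. if fst p \<in> e \<and> snd p \<in> e then 1 else 0)"
    by (rule sum.swap)
  also have "\<dots> = (\<Sum>p\<in>S \<times> (V-S). lam)"
  proof (rule sum.cong[OF refl])
    fix p assume p: "p \<in> S \<times> (V-S)"
    have pv: "fst p \<in> V" "snd p \<in> V" "fst p \<noteq> snd p" using p S by auto
    have "(\<Sum>e\<in>E. if fst p \<in> e \<and> snd p \<in> e then 1 else 0) = card {e\<in>E. fst p \<in> e \<and> snd p \<in> e}"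
      using card_filter_sum[OF fE] by simp
    also have "\<dots> = lam" using pairs[OF pv] .
    finally show "(\<Sum>e\<in>E. if fst p \<in> e \<and> snd p \<in> e then 1 else (0::nat)) = lam" .
  qed
  also have "\<dots> = lam * (card S * card (V-S))" by (simp add: card_cartesian_product)
  finally show ?thesis .
qed

lemma cut_bound:
  assumes d: "design2 V E n b k r lam" and S: "S \<subset> V" "S \<noteq> {}"
  shows "n * lam \<le> card (cut_edges V E S) * k"
proof -
  have fV: "finite V" and EV: "E \<subseteq> Pow V" and fE: "finite E" and cV: "card V = n"
    and ck: "\<And>e. e\<in>E \<Longrightarrow> card e = k"
    using d unfolding design2_def by auto
  define s where "s = card S"
  define t where "t = card (V-S)"
  have fS: "finite S" using S fV finite_subset by blast
  have nst: "n = s + t" unfolding s_def t_def cV[symmetric]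
    using S fS fV by (metis card_Diff_subset card_mono diff_add_inverse le_add_diff_inverse psubset_imp_subset)
  have s0: "s > 0" using S fS s_def by auto
  have t0: "t > 0" using S fV t_def by auto
  have C: "cut_edges V E S \<subseteq> E" unfolding cut_edges_def by auto
  have fC: "finite (cut_edges V E S)" using C fE finite_subset by blast
  have pc: "(\<Sum>e\<in>E. card (e\<inter>S) * card (e-S)) = lam * (s * t)"
    using pair_count[OF d] S unfolding s_def t_def by auto
  have "(\<Sum>e\<in>E. card (e\<inter>S) * card (e-S)) = (\<Sum>e\<in>cut_edges V E S. card (e\<inter>S) * card (e-S))"
  proof (rule sum.mono_neutral_right[OF fE C])
    show "\<forall>e\<in>E - cut_edges V E S. card (e \<inter> S) * card (e - S) = 0"
    proof
      fix e assume e: "e \<in> E - cut_edges V E S"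
      hence "e \<inter> S = {} \<or> e - S = {}" using EV unfolding cut_edges_def by auto
      thus "card (e \<inter> S) * card (e - S) = 0" by (metis card.empty mult_0 mult_0_right)
    qed
  qed
  hence "n * (lam * (s*t)) = (\<Sum>e\<in>cut_edges V E S. n * (card (e\<inter>S) * card (e-S)))"
    using pc by (simp add: sum_distrib_left)
  also have "\<dots> \<le> (\<Sum>e\<in>cut_edges V E S. k * (s * t))"
  proof (rule sum_mono)
    fix e assume e: "e \<in> cut_edges V E S"
    hence eE: "e \<in> E" and eV: "e \<subseteq> V" using C EV by auto
    have fe: "finite e" using eV fV finite_subset by blast
    define a where "a = card (e \<inter> S)"
    define c where "c = card (e - S)"
    have ak: "a + c = k" unfolding a_def c_def ck[OF eE, symmetric]
      using fe by (metis Diff_Diff_Int Diff_disjoint Int_Diff_Un Int_commute card_Un_disjoint finite_Diff finite_Int)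
    have "a \<le> s" unfolding a_def s_def using fS by (simp add: card_mono)
    then obtain p where p: "s = a + p" using le_Suc_ex by blast
    have "c \<le> t" unfolding c_def t_def using fV eV by (intro card_mono) auto
    then obtain q where q: "t = c + q" using le_Suc_ex by blast
    have n2: "n = a+c+p+q" using nst p q by simp
    have "n * (a*c) \<le> (a+c) * (s*t)" unfolding n2 p q by (rule ineq_aux)
    hence "n * (a*c) \<le> k * (s*t)" using ak by simp
    thus "n * (card (e\<inter>S) * card (e-S)) \<le> k * (s*t)" unfolding a_def c_def .
  qed
  also have "\<dots> = (card (cut_edges V E S) * k) * (s*t)" by simp
  finally have "(n*lam) * (s*t) \<le> (card (cut_edges V E S) * k) * (s*t)" by (simp add: ac_simps)
  thus ?thesis using s0 t0 by simp
qed

lemma single_cut: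
  assumes d: "design2 V E n b k r lam" and v: "v \<in> V" and k2: "k \<ge> 2"
  shows "card (cut_edges V E {v}) = r"
proof -
  have EV: "E \<subseteq> Pow V" and ck: "\<And>e. e\<in>E \<Longrightarrow> card e = k"
    and rr: "card {e\<in>E. v \<in> e} = r"
    using d v unfolding design2_def by auto
  have "cut_edges V E {v} = {e\<in>E. v \<in> e}"
  proof (rule set_eqI, rule iffI)
    fix e assume "e \<in> {e\<in>E. v \<in> e}"
    hence e: "e \<in> E" "v \<in> e" by auto
    have "e \<noteq> {v}" using ck[OF e(1)] k2 by auto
    hence "e - {v} \<noteq> {}" using e(2) by auto
    thus "e \<in> cut_edges V E {v}" unfolding cut_edges_def using e EV by auto
  qed (auto simp: cut_edges_def)
  thus ?thesis using rr by simp
qed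

theorem theorem3p9:
  fixes V :: "'a set" and E :: "'a set set" and n b k r lam :: nat
  assumes "design2 V E n b k r lam"
    and "n \<ge> 2"
    and "lam \<ge> 1"
  shows "real n * real lam / real k \<le> real (edge_conn V E)
       \<and> real (edge_conn V E) \<le> (real n - 1) * real lam / (real k - 1)
       \<and> (n = b \<longrightarrow> edge_conn V E = k \<and> k = r)"
proof -
  note d = assms(1)
  have fV: "finite V" and EV: "E \<subseteq> Pow V" and fE: "finite E" and cV: "card V = n"
    and cE: "card E = b"
    and ck: "\<And>e. e\<in>E \<Longrightarrow> card e = k"
    and cr: "\<And>v. v\<in>V \<Longrightarrow> card {e\<in>E. v \<in> e} = r"
    and pairs: "\<And>x y. x\<in>V \<Longrightarrow> y\<in>V \<Longrightarrow> x\<noteq>y \<Longrightarrow> card {e\<in>E. x \<in> e \<and> y \<in> e} = lam"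
    using d unfolding design2_def by auto
  have "V \<noteq> {}" using assms(2) cV by auto
  then obtain x where x: "x \<in> V" by blast
  have "card (V - {x}) = n - 1" using x cV fV by simp
  hence "card (V - {x}) \<noteq> 0" using assms(2) by simp
  hence "V - {x} \<noteq> {}" by (metis card.empty)
  then obtain y where y: "y \<in> V - {x}" by blast
  have xy: "x \<in> V" "y \<in> V" "x \<noteq> y" using x y by auto
  have "card {e\<in>E. x \<in> e \<and> y \<in> e} \<noteq> 0" using pairs[OF xy] assms(3) by simp
  hence "{e\<in>E. x \<in> e \<and> y \<in> e} \<noteq> {}" by (metis card.empty)
  then obtain e where e: "e \<in> E" "x \<in> e" "y \<in> e" by blast
  have fe: "finite e" using e EV fV finite_subset by blast
  have "card {x,y} \<le> card e" using e fe by (intro card_mono) auto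
  hence k2: "k \<ge> 2" using ck[OF e(1)] xy by simp
  have rk: "r * (k - 1) = lam * (n - 1)"
  proof -
    have "{x} \<subseteq> V" using xy by auto
    from pair_count[OF d this]
    have eq: "(\<Sum>e\<in>E. card (e\<inter>{x}) * card (e-{x})) = lam * (n - 1)"
      using cV fV xy by simp
    have "(\<Sum>e\<in>E. card (e\<inter>{x}) * card (e-{x})) = (\<Sum>e\<in>E. if x \<in> e then k - 1 else 0)"
    proof (rule sum.cong[OF refl])
      fix e assume e: "e \<in> E"
      have fe: "finite e" using e EV fV finite_subset by blast
      show "card (e\<inter>{x}) * card (e-{x}) = (if x \<in> e then k - 1 else 0)"
        using ck[OF e] fe by (cases "x \<in> e") auto
    qed
    also have "\<dots> = card {e\<in>E. x \<in> e} * (k - 1)"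
      using card_filter_sum[OF fE, of "\<lambda>e. x \<in> e"] by (simp add: sum_distrib_right; intro sum.cong refl; simp)
    finally show ?thesis using eq cr[OF xy(1)] by simp
  qed
  have bk: "b * k = n * r"
  proof -
    have "b * k = (\<Sum>e\<in>E. card e)" using ck cE by simp
    also have "\<dots> = (\<Sum>e\<in>E. \<Sum>v\<in>V. if v \<in> e then 1 else 0)"
    proof (rule sum.cong[OF refl])
      fix e assume e: "e \<in> E"
      have "e = {v\<in>V. v \<in> e}" using e EV by auto
      thus "card e = (\<Sum>v\<in>V. if v \<in> e then 1 else 0)"
        using card_filter_sum[OF fV, of "\<lambda>v. v \<in> e"] by simp
    qed
    also have "\<dots> = (\<Sum>v\<in>V. \<Sum>e\<in>E. if v \<in> e then 1 else 0)" by (rule sum.swap)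
    also have "\<dots> = (\<Sum>v\<in>V. r)"
      using cr card_filter_sum[OF fE] by (intro sum.cong) auto
    finally show ?thesis using cV by simp
  qed
  define C where "C = {card (cut_edges V E S) | S. S \<subset> V \<and> S \<noteq> {}}"
  have Cb: "C \<subseteq> {0..b}"
  proof
    fix c assume "c \<in> C"
    then obtain S where "c = card (cut_edges V E S)" unfolding C_def by auto
    moreover have "cut_edges V E S \<subseteq> E" unfolding cut_edges_def by auto
    ultimately show "c \<in> {0..b}" using card_mono[OF fE] cE by auto
  qed
  hence fC: "finite C" using finite_subset by blast
  have xV: "{x} \<subset> V" using xy by auto
  have rC: "r \<in> C" unfolding C_def using single_cut[OF d xy(1) k2] xV by force
  have ec: "edge_conn V E = Min C" unfolding edge_conn_def C_def by simp
  have le_r: "edge_conn V E \<le> r" using ec fC rC by simp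
  have "Min C \<in> C" using fC rC by (intro Min_in) auto
  then obtain S where S: "S \<subset> V" "S \<noteq> {}" "edge_conn V E = card (cut_edges V E S)"
    unfolding C_def ec by auto
  have low: "n * lam \<le> edge_conn V E * k" using cut_bound[OF d S(1,2)] S(3) by simp
  have k0: "real k > 0" using k2 by simp
  have A: "real n * real lam / real k \<le> real (edge_conn V E)"
    using low k0 by (simp add: pos_divide_le_eq of_nat_mult[symmetric] del: of_nat_mult)
  have rr: "real r * (real k - 1) = real lam * (real n - 1)"
  proof -
    have "real (r * (k - 1)) = real (lam * (n - 1))" using rk by simp
    thus ?thesis using k2 assms(2) by (simp add: of_nat_diff)
  qed
  have k1: "real k - 1 > 0" using k2 by simp
  have B: "real (edge_conn V E) \<le> (real n - 1) * real lam / (real k - 1)"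
  proof -
    have "real r = (real n - 1) * real lam / (real k - 1)" using rr k1 by (simp add: field_simps)
    thus ?thesis using le_r by simp
  qed
  have Cc: "n = b \<longrightarrow> edge_conn V E = k \<and> k = r"
  proof
    assume nb: "n = b"
    have kr: "k = r" using bk nb assms(2) by simp
    have "edge_conn V E \<ge> k"
    proof (rule ccontr)
      assume "\<not> edge_conn V E \<ge> k"
      hence "edge_conn V E \<le> k - 1" by simp
      hence "edge_conn V E * k \<le> (k - 1) * k" by (rule mult_le_mono1)
      also have "\<dots> = lam * (n - 1)" using rk kr by (simp add: mult.commute)
      also have "\<dots> < lam * n" using assms(2,3) by simp
      finally show False using low by (simp add: mult.commute)
    qed
    thus "edge_conn V E = k \<and> k = r" using le_r kr by simp
  qed
  show ?thesis using A B Cc by blast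
qed

end
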